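(* Let $\mathcal{G}$ be a locally finite, one-ended, hyperfinite, measure class preserving measurable graph on a standard probability space $(X,\nu)$, with measurable spanning tree $\mathcal{T}$. Then for $\nu$-a.e. $x$, letting $G$ be the $\mathcal G$-component of $x$ and $T=\mathcal T\cap G$, either $T\setminus\mathrm{Core}_{\mathcal{T}}(\mathcal{G})=T$ or all connected components of $T\setminus\mathrm{Core}_{\mathcal{T}}(\mathcal{G})$ are finite.
   Context: mcp: Borel bijections of $X$ with graph inside the connectedness relation of $\mathcal G$ preserve $\nu$-null sets. Hyperfinite: increasing union of measurable graphs with a.e. finite components. One-ended: a.e. component is one-ended. A measurable spanning tree is a measurable acyclic subgraph with the same components as $\mathcal G$ a.e. A fundamental cycle relative to $\mathcal T$ is a cycle in $\mathcal G$ with exactly one edge not in $\mathcal T$; $\mathrm{Core}_{\mathcal T}(\mathcal G)$ is the set of edges of $\mathcal T$ lying in infinitely many fundamental cycles. *)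

theory Defs
  imports "HOL-Probability.Probability"
begin

text \<open>Graphs on a vertex type are edge relations (sets of ordered pairs);
undirected simple graphs are symmetric and irreflexive relations.\<close>

definition simple_graph :: "('a \<times> 'a) set \<Rightarrow> bool" where
  "simple_graph H \<longleftrightarrow> sym H \<and> irrefl H"

definition component :: "('a \<times> 'a) set \<Rightarrow> 'a \<Rightarrow> 'a set" where
  "component H x = {y. (x, y) \<in> H\<^sup>*}"

definition locally_finite :: "('a \<times> 'a) set \<Rightarrow> bool" where
  "locally_finite H \<longleftrightarrow> (\<forall>x. finite {y. (x, y) \<in> H})"

definition induced :: "('a \<times> 'a) set \<Rightarrow> 'a set \<Rightarrow> ('a \<times> 'a) set" where
  "induced H S = {(u, v) \<in> H. u \<in> S \<and> v \<in> S}"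

definition components_on :: "('a \<times> 'a) set \<Rightarrow> 'a set \<Rightarrow> 'a set set" where
  "components_on H S = {component (induced H S) x | x. x \<in> S}"

definition one_ended_component :: "('a \<times> 'a) set \<Rightarrow> 'a set \<Rightarrow> bool" where
  "one_ended_component H C \<longleftrightarrow> infinite C \<and>
     (\<forall>F. finite F \<longrightarrow> (\<exists>!K. K \<in> components_on H (C - F) \<and> infinite K))"

definition cycle_edges :: "'a list \<Rightarrow> ('a \<times> 'a) set" where
  "cycle_edges c = (\<Union>i<length c. {(c ! i, c ! (Suc i mod length c)),
                                     (c ! (Suc i mod length c), c ! i)})"

definition is_cycle :: "('a \<times> 'a) set \<Rightarrow> 'a list \<Rightarrow> bool" where
  "is_cycle H c \<longleftrightarrow> length c \<ge> 3 \<and> distinct c \<and> cycle_edges c \<subseteq> H"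

definition acyclic_graph :: "('a \<times> 'a) set \<Rightarrow> bool" where
  "acyclic_graph H \<longleftrightarrow> (\<nexists>c. is_cycle H c)"

definition fundamental_cycle :: "('a \<times> 'a) set \<Rightarrow> ('a \<times> 'a) set \<Rightarrow> 'a list \<Rightarrow> bool" where
  "fundamental_cycle G T c \<longleftrightarrow> is_cycle G c \<and>
     (\<exists>u v. cycle_edges c - T = {(u, v), (v, u)})"

text \<open>Core: edges of T lying in infinitely many fundamental cycles (a cycle is
identified with its edge set).\<close>
definition Core :: "('a \<times> 'a) set \<Rightarrow> ('a \<times> 'a) set \<Rightarrow> ('a \<times> 'a) set" where
  "Core G T = {e \<in> T. infinite {cycle_edges c | c. fundamental_cycle G T c \<and> e \<in> cycle_edges c}}"

definition measurable_graph :: "'a measure \<Rightarrow> ('a \<times> 'a) set \<Rightarrow> bool" where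
  "measurable_graph M H \<longleftrightarrow> simple_graph H \<and> H \<subseteq> space M \<times> space M \<and> H \<in> sets (M \<Otimes>\<^sub>M M)"

definition mcp :: "'a measure \<Rightarrow> ('a \<times> 'a) set \<Rightarrow> bool" where
  "mcp M H \<longleftrightarrow> (\<forall>f. bij_betw f (space M) (space M) \<and> f \<in> M \<rightarrow>\<^sub>M M
        \<and> the_inv_into (space M) f \<in> M \<rightarrow>\<^sub>M M
        \<and> (\<forall>x\<in>space M. (x, f x) \<in> H\<^sup>*) \<longrightarrow>
        (\<forall>A\<in>sets M. emeasure M A = 0 \<longrightarrow> emeasure M (f ` A) = 0))"

definition hyperfinite :: "'a measure \<Rightarrow> ('a \<times> 'a) set \<Rightarrow> bool" where
  "hyperfinite M H \<longleftrightarrow> (\<exists>Hn :: nat \<Rightarrow> ('a \<times> 'a) set.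
      (\<forall>n. measurable_graph M (Hn n)) \<and> incseq Hn \<and> (\<Union>n. Hn n) = H \<and>
      (\<forall>n. AE x in M. finite (component (Hn n) x)))"

definition one_ended :: "'a measure \<Rightarrow> ('a \<times> 'a) set \<Rightarrow> bool" where
  "one_ended M H \<longleftrightarrow> (AE x in M. one_ended_component H (component H x))"

definition measurable_spanning_tree :: "'a measure \<Rightarrow> ('a \<times> 'a) set \<Rightarrow> ('a \<times> 'a) set \<Rightarrow> bool" where
  "measurable_spanning_tree M H T \<longleftrightarrow> measurable_graph M T \<and> T \<subseteq> H \<and> acyclic_graph T \<and>
      (AE x in M. component T x = component H x)"

end

theory Submission
  imports Defs
begin


fun pe :: "'a list \<Rightarrow> ('a \<times> 'a) set" where
  "pe (x#y#zs) = {(x,y),(y,x)} \<union> pe (y#zs)"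
| "pe _ = {}"

lemma pe_split: "pe (xs @ y # zs) = pe (xs @ [y]) \<union> pe (y # zs)"
proof (induction xs)
  case Nil then show ?case by simp
next
  case (Cons x xs) then show ?case by (cases xs) auto
qed

lemma pe_snoc: "xs \<noteq> [] \<Longrightarrow> pe (xs @ [z]) = pe xs \<union> {(last xs, z), (z, last xs)}"
proof (induction xs)
  case Nil then show ?case by simp
next
  case (Cons x xs) then show ?case by (cases xs) auto
qed

lemma pe_sym: "(a,b) \<in> pe w \<Longrightarrow> (b,a) \<in> pe w"
  by (induction w rule: pe.induct) auto

lemma pe_walk: "w \<noteq> [] \<Longrightarrow> z \<in> set w \<Longrightarrow> (hd w, z) \<in> (pe w)\<^sup>*"
proof (induction w rule: pe.induct)
  case (1 x y zs)
  have s: "pe (y#zs) \<subseteq> pe (x#y#zs)" by auto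
  show ?case
  proof (cases "z = x")
    case True then show ?thesis by simp
  next
    case False
    then have "(y, z) \<in> (pe (y#zs))\<^sup>*" using 1 by simp
    then have "(y, z) \<in> (pe (x#y#zs))\<^sup>*" using rtrancl_mono[OF s] by blast
    moreover have "(x,y) \<in> pe (x#y#zs)" by simp
    ultimately have "(x, z) \<in> (pe (x#y#zs))\<^sup>*" by (meson converse_rtrancl_into_rtrancl)
    then show ?thesis by simp
  qed
qed auto

lemma pe_hd_last: "w \<noteq> [] \<Longrightarrow> (hd w, last w) \<in> (pe w)\<^sup>*"
  using pe_walk[of w "last w"] by simp

lemma pe_nth1: "Suc i < length w \<Longrightarrow> (w!i, w!Suc i) \<in> pe w"
proof (induction w arbitrary: i rule: pe.induct)
  case (1 x y zs)
  then show ?case by (cases i) auto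
qed auto

lemma pe_nth2: "e \<in> pe w \<Longrightarrow> \<exists>i. Suc i < length w \<and> (e = (w!i, w!Suc i) \<or> e = (w!Suc i, w!i))"
proof (induction w rule: pe.induct)
  case (1 x y zs)
  show ?case
  proof (cases "e \<in> pe (y#zs)")
    case True
    then obtain i where "Suc i < length (y#zs)" "e = ((y#zs)!i, (y#zs)!Suc i) \<or> e = ((y#zs)!Suc i, (y#zs)!i)"
      using 1 by blast
    then show ?thesis by (intro exI[of _ "Suc i"]) simp
  next
    case False
    then show ?thesis using 1(2) by (intro exI[of _ 0]) auto
  qed
qed auto


lemma cycle_edges_pe:
  assumes "c \<noteq> []"
  shows "cycle_edges c = pe c \<union> {(last c, hd c), (hd c, last c)}"
proof (intro equalityI subsetI)
  let ?n = "length c"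
  have n: "?n > 0" using assms by simp
  fix e assume "e \<in> cycle_edges c"
  then obtain i where i: "i < ?n" "e = (c!i, c!(Suc i mod ?n)) \<or> e = (c!(Suc i mod ?n), c!i)"
    unfolding cycle_edges_def by blast
  show "e \<in> pe c \<union> {(last c, hd c), (hd c, last c)}"
  proof (cases "Suc i < ?n")
    case True
    then have m: "Suc i mod ?n = Suc i" by simp
    have h1: "(c!i, c!Suc i) \<in> pe c" by (rule pe_nth1[OF True])
    have h2: "(c!Suc i, c!i) \<in> pe c" by (rule pe_sym[OF h1])
    note h1 h2
    then show ?thesis using i(2) unfolding m by blast
  next
    case False
    then have "i = ?n - 1" using i by simp
    then have "Suc i mod ?n = 0" "c!i = last c" "c!0 = hd c"
      using assms by (auto simp: last_conv_nth hd_conv_nth)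
    then show ?thesis using i by auto
  qed
next
  let ?n = "length c"
  fix e assume e: "e \<in> pe c \<union> {(last c, hd c), (hd c, last c)}"
  show "e \<in> cycle_edges c"
  proof (cases "e \<in> pe c")
    case True
    then obtain i where i: "Suc i < ?n" "e = (c!i, c!Suc i) \<or> e = (c!Suc i, c!i)"
      using pe_nth2 by blast
    then have m: "Suc i mod ?n = Suc i" by simp
    have "i < ?n" using i by simp
    then show ?thesis using i(2) unfolding cycle_edges_def by (intro UN_I[of i]) (auto simp: m)
  next
    case False
    then have e2: "e = (last c, hd c) \<or> e = (hd c, last c)" using e by blast
    have "Suc (?n - 1) mod ?n = 0" "c!(?n - 1) = last c" "c!0 = hd c" "?n - 1 < ?n"
      using assms by (auto simp: last_conv_nth hd_conv_nth)
    then show ?thesis using e2 unfolding cycle_edges_def by (intro UN_I[of "?n - 1"]) auto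
  qed
qed

lemma cycle_edges_sym: "(a,b) \<in> cycle_edges c \<Longrightarrow> (b,a) \<in> cycle_edges c"
  unfolding cycle_edges_def by blast

lemma cycle_edges_rotate1: "cycle_edges (rotate1 c) = cycle_edges c"
proof (cases c)
  case Nil then show ?thesis by simp
next
  case (Cons x xs)
  show ?thesis
  proof (cases "xs = []")
    case True then show ?thesis using Cons by simp
  next
    case False
    have "cycle_edges (rotate1 c) = pe (xs @ [x]) \<union> {(x, hd xs), (hd xs, x)}"
      using Cons False by (subst cycle_edges_pe) auto
    also have "\<dots> = pe xs \<union> {(last xs, x), (x, last xs)} \<union> {(x, hd xs), (hd xs, x)}"
      using pe_snoc[OF False] by simp
    also have "\<dots> = cycle_edges c"
      using Cons False by (subst cycle_edges_pe) (auto simp: neq_Nil_conv)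
    finally show ?thesis .
  qed
qed

lemma cycle_edges_rotate: "cycle_edges (rotate n c) = cycle_edges c"
  by (induction n) (auto simp: cycle_edges_rotate1)

lemma pe_decomp: "(a,b) \<in> pe w \<Longrightarrow> \<exists>xs ys. w = xs @ a # b # ys \<or> w = xs @ b # a # ys"
proof (induction w rule: pe.induct)
  case (1 x y zs)
  show ?case
  proof (cases "(a,b) \<in> pe (y#zs)")
    case True
    then obtain xs ys where "y#zs = xs @ a # b # ys \<or> y#zs = xs @ b # a # ys" using 1 by blast
    then have "x#y#zs = (x#xs) @ a # b # ys \<or> x#y#zs = (x#xs) @ b # a # ys" by simp
    then show ?thesis by (rule exI[where x="x#xs", OF exI[where x=ys]])
  next
    case False
    then have "(a,b) = (x,y) \<or> (a,b) = (y,x)" using 1(2) by auto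
    then have "x#y#zs = [] @ a # b # zs \<or> x#y#zs = [] @ b # a # zs" by auto
    then show ?thesis by (rule exI[where x="[]", OF exI[where x=zs]])
  qed
qed auto

lemma rotate_split: "rotate (length (xs @ [a])) (xs @ a # b # ys) = b # ys @ xs @ [a]"
proof -
  have "xs @ a # b # ys = (xs @ [a]) @ (b # ys)" by simp
  then show ?thesis using rotate_append[of "xs @ [a]" "b # ys"] by simp
qed

lemma rotate_edge:
  assumes "c \<noteq> []" "g \<in> cycle_edges c"
  shows "\<exists>n. g = (last (rotate n c), hd (rotate n c)) \<or> g = (hd (rotate n c), last (rotate n c))"
proof (cases "g \<in> pe c")
  case True
  obtain a b where g: "g = (a,b)" by (cases g)
  have ab: "(a,b) \<in> pe c" using True g by simp
  obtain xs ys where "c = xs @ a # b # ys \<or> c = xs @ b # a # ys"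
    using pe_decomp[OF ab] by metis
  then show ?thesis
  proof
    assume c: "c = xs @ a # b # ys"
    have r: "rotate (length (xs @ [a])) c = b # ys @ xs @ [a]"
      unfolding c by (rule rotate_split)
    have "g = (last (rotate (length (xs @ [a])) c), hd (rotate (length (xs @ [a])) c))"
      unfolding r g by simp
    then show ?thesis by blast
  next
    assume c: "c = xs @ b # a # ys"
    have r: "rotate (length (xs @ [b])) c = a # ys @ xs @ [b]"
      unfolding c by (rule rotate_split)
    have "g = (hd (rotate (length (xs @ [b])) c), last (rotate (length (xs @ [b])) c))"
      unfolding r g by simp
    then show ?thesis by blast
  qed
next
  case False
  then have "g \<in> {(last c, hd c), (hd c, last c)}" using assms cycle_edges_pe[OF assms(1)] by blast
  then have "g = (last (rotate 0 c), hd (rotate 0 c)) \<or> g = (hd (rotate 0 c), last (rotate 0 c))" by simp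
  then show ?thesis by (rule exI)
qed

lemma sym_rtrancl_rev: "sym E \<Longrightarrow> (x,y) \<in> E\<^sup>* \<Longrightarrow> (y,x) \<in> E\<^sup>*"
  by (metis rtrancl_converseI sym_conv_converse_eq)

lemma sym_pe: "sym (pe w)"
  by (rule symI) (rule pe_sym)

lemma dist_pe_hd_last:
  assumes "distinct w" "length w \<ge> 3"
  shows "(hd w, last w) \<notin> pe w"
proof
  assume "(hd w, last w) \<in> pe w"
  then obtain i where i: "Suc i < length w" "(hd w, last w) = (w!i, w!Suc i) \<or> (hd w, last w) = (w!Suc i, w!i)"
    using pe_nth2 by blast
  have ne: "w \<noteq> []" using assms by auto
  have h: "hd w = w!0" "last w = w!(length w - 1)" using ne by (auto simp: hd_conv_nth last_conv_nth)
  from i(2) show False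
  proof
    assume "(hd w, last w) = (w!i, w!Suc i)"
    then have "w!0 = w!i" "w!(length w - 1) = w!Suc i" using h by auto
    moreover have "length w - 1 < length w" "0 < length w" using ne by auto
    ultimately have "i = 0" "length w - 1 = Suc i"
      using nth_eq_iff_index_eq[OF assms(1)] i(1) by (metis Suc_lessD)+
    then show False using assms by simp
  next
    assume "(hd w, last w) = (w!Suc i, w!i)"
    then have "w!0 = w!Suc i" using h by auto
    moreover have "0 < length w" using ne by auto
    ultimately have "0 = Suc i" using nth_eq_iff_index_eq[OF assms(1)] i(1) by metis
    then show False by simp
  qed
qed

lemma cycle_path:
  assumes "distinct c" "length c \<ge> 3" "g \<in> cycle_edges c"
  shows "(fst g, snd g) \<in> (cycle_edges c - {g, prod.swap g})\<^sup>*"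
proof -
  have ne: "c \<noteq> []" using assms by auto
  obtain n where n: "g = (last (rotate n c), hd (rotate n c)) \<or> g = (hd (rotate n c), last (rotate n c))"
    using rotate_edge[OF ne assms(3)] by (elim exE)
  define c' where "c' = rotate n c"
  have n': "g = (last c', hd c') \<or> g = (hd c', last c')" using n unfolding c'_def .
  have d: "distinct c'" "length c' \<ge> 3" using assms unfolding c'_def by simp_all
  have ne': "c' \<noteq> []" using d by auto
  have ce: "cycle_edges c = pe c' \<union> {(last c', hd c'), (hd c', last c')}"
    using cycle_edges_rotate[of n c] cycle_edges_pe[OF ne'] unfolding c'_def by simp
  have nin1: "(hd c', last c') \<notin> pe c'" using dist_pe_hd_last[OF d] .
  have nin2: "(last c', hd c') \<notin> pe c'"
  proof
    assume "(last c', hd c') \<in> pe c'"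
    then have "(hd c', last c') \<in> pe c'" by (rule pe_sym)
    then show False using nin1 by contradiction
  qed
  have sub: "pe c' \<subseteq> cycle_edges c - {g, prod.swap g}"
  proof
    fix e assume e: "e \<in> pe c'"
    have "e \<noteq> (hd c', last c')" "e \<noteq> (last c', hd c')" using e nin1 nin2 by auto
    moreover have "g \<in> {(hd c', last c'), (last c', hd c')}" "prod.swap g \<in> {(hd c', last c'), (last c', hd c')}"
      using n' by auto
    ultimately have "e \<noteq> g" "e \<noteq> prod.swap g" by auto
    moreover have "e \<in> cycle_edges c" using e ce by simp
    ultimately show "e \<in> cycle_edges c - {g, prod.swap g}" by simp
  qed
  have p1: "(hd c', last c') \<in> (pe c')\<^sup>*" using pe_hd_last[OF ne'] .
  have p2: "(last c', hd c') \<in> (pe c')\<^sup>*" using sym_rtrancl_rev[OF sym_pe p1] .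
  have "(fst g, snd g) \<in> (pe c')\<^sup>*" using n' p1 p2 by auto
  then show ?thesis using rtrancl_mono[OF sub] by blast
qed



lemma walk_exists:
  assumes "(x,y) \<in> E\<^sup>*"
  shows "\<exists>w. w \<noteq> [] \<and> hd w = x \<and> last w = y \<and> pe w \<subseteq> E \<union> E\<inverse>"
  using assms
proof (induction rule: rtrancl_induct)
  case base
  have "[x] \<noteq> [] \<and> hd [x] = x \<and> last [x] = x \<and> pe [x] \<subseteq> E \<union> E\<inverse>" by simp
  then show ?case by (rule exI)
next
  case (step y z)
  then obtain w where w: "w \<noteq> []" "hd w = x" "last w = y" "pe w \<subseteq> E \<union> E\<inverse>" by metis
  have "pe (w @ [z]) = pe w \<union> {(y, z), (z, y)}" using pe_snoc[OF w(1)] w(3) by simp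
  then have "w @ [z] \<noteq> [] \<and> hd (w @ [z]) = x \<and> last (w @ [z]) = z \<and> pe (w @ [z]) \<subseteq> E \<union> E\<inverse>"
    using w step(2) by auto
  then show ?case by (rule exI)
qed

lemma shorten:
  "w \<noteq> [] \<Longrightarrow> \<exists>w'. w' \<noteq> [] \<and> hd w' = hd w \<and> last w' = last w \<and> pe w' \<subseteq> pe w \<and> distinct w'"
proof (induction "length w" arbitrary: w rule: less_induct)
  case less
  show ?case
  proof (cases "distinct w")
    case True
    then have "w \<noteq> [] \<and> hd w = hd w \<and> last w = last w \<and> pe w \<subseteq> pe w \<and> distinct w" using less by simp
    then show ?thesis by (rule exI)
  next
    case False
    obtain xs y ys zs where w: "w = xs @ [y] @ ys @ [y] @ zs"
      using not_distinct_decomp[OF False] by metis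
    define w1 where "w1 = xs @ y # zs"
    have len: "length w1 < length w" using w by (simp add: w1_def)
    have ne: "w1 \<noteq> []" by (simp add: w1_def)
    have h: "hd w1 = hd w" using w by (cases xs) (simp_all add: w1_def)
    have l: "last w1 = last w" using w by (cases zs) (simp_all add: w1_def)
    have p1: "pe w1 = pe (xs @ [y]) \<union> pe (y # zs)" unfolding w1_def by (rule pe_split)
    have p2: "pe w = pe (xs @ [y]) \<union> pe (y # ys @ y # zs)"
      using pe_split[of xs y "ys @ y # zs"] w by simp
    have p3: "pe (y # ys @ y # zs) = pe ((y # ys) @ [y]) \<union> pe (y # zs)"
      using pe_split[of "y # ys" y zs] by simp
    have sub: "pe w1 \<subseteq> pe w" using p1 p2 p3 by blast
    obtain w' where w': "w' \<noteq> []" "hd w' = hd w1" "last w' = last w1" "pe w' \<subseteq> pe w1" "distinct w'"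
      using less(1)[OF len ne] by metis
    have "w' \<noteq> [] \<and> hd w' = hd w \<and> last w' = last w \<and> pe w' \<subseteq> pe w \<and> distinct w'"
      using w' h l sub by simp
    then show ?thesis by (rule exI)
  qed
qed

lemma simple_path:
  assumes "sym E" "(x,y) \<in> E\<^sup>*"
  shows "\<exists>w. w \<noteq> [] \<and> hd w = x \<and> last w = y \<and> pe w \<subseteq> E \<and> distinct w"
proof -
  obtain w where w: "w \<noteq> []" "hd w = x" "last w = y" "pe w \<subseteq> E \<union> E\<inverse>"
    using walk_exists[OF assms(2)] by metis
  obtain w' where w': "w' \<noteq> []" "hd w' = hd w" "last w' = last w" "pe w' \<subseteq> pe w" "distinct w'"
    using shorten[OF w(1)] by metis
  have "E \<union> E\<inverse> = E" using assms(1) by (auto simp: sym_def)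
  then have "w' \<noteq> [] \<and> hd w' = x \<and> last w' = y \<and> pe w' \<subseteq> E \<and> distinct w'"
    using w w' by simp
  then show ?thesis by (rule exI)
qed

definition rm :: "('a \<times> 'a) set \<Rightarrow> 'a \<Rightarrow> 'a \<Rightarrow> ('a \<times> 'a) set" where
  "rm T p q = T - {(p,q),(q,p)}"

definition side :: "('a \<times> 'a) set \<Rightarrow> 'a \<Rightarrow> 'a \<Rightarrow> 'a set" where
  "side T p q = {z. (p,z) \<in> (rm T p q)\<^sup>*}"

lemma rm_comm: "rm T p q = rm T q p"
  unfolding rm_def by blast

lemma sym_rm: "sym T \<Longrightarrow> sym (rm T p q)"
  unfolding rm_def sym_def by blast

lemma rm_sub: "rm T p q \<subseteq> T"
  unfolding rm_def by blast

lemma tree_sep: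
  assumes sg: "simple_graph T" and ac: "acyclic_graph T" and pq: "(p,q) \<in> T"
  shows "(p,q) \<notin> (rm T p q)\<^sup>*"
proof
  assume h: "(p,q) \<in> (rm T p q)\<^sup>*"
  have sT: "sym T" and iT: "irrefl T" using sg by (auto simp: simple_graph_def)
  obtain w where w: "w \<noteq> []" "hd w = p" "last w = q" "pe w \<subseteq> rm T p q" "distinct w"
    using simple_path[OF sym_rm[OF sT] h] by metis
  have pq': "p \<noteq> q" using iT pq by (auto simp: irrefl_def)
  obtain w1 where w1: "w = p # w1" using w(1,2) by (cases w) auto
  have "w1 \<noteq> []" using w1 w(3) pq' by auto
  then obtain r w2 where w2: "w1 = r # w2" by (cases w1) auto
  show False
  proof (cases "w2 = []")
    case True
    then have "w = [p, q]" using w1 w2 w(3) by simp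
    then have "(p,q) \<in> rm T p q" using w(4) by simp
    then show False unfolding rm_def by simp
  next
    case False
    then have len: "length w \<ge> 3" using w1 w2 by (cases w2) auto
    have "cycle_edges w = pe w \<union> {(q, p), (p, q)}" using cycle_edges_pe[OF w(1)] w(2,3) by simp
    also have "\<dots> \<subseteq> T" using w(4) rm_sub[of T p q] pq sT by (auto simp: sym_def)
    finally have "is_cycle T w" using len w(5) by (simp add: is_cycle_def)
    then show False using ac by (auto simp: acyclic_graph_def)
  qed
qed

lemma side_disj:
  assumes "simple_graph T" "acyclic_graph T" "(p,q) \<in> T"
  shows "side T p q \<inter> side T q p = {}"
proof (rule ccontr)
  assume "side T p q \<inter> side T q p \<noteq> {}"
  then obtain z where z: "(p,z) \<in> (rm T p q)\<^sup>*" "(q,z) \<in> (rm T p q)\<^sup>*"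
    unfolding side_def using rm_comm[of T p q] by auto
  have sT: "sym T" using assms(1) by (simp add: simple_graph_def)
  have "(z,q) \<in> (rm T p q)\<^sup>*" using sym_rtrancl_rev[OF sym_rm[OF sT] z(2)] .
  then have "(p,q) \<in> (rm T p q)\<^sup>*" using rtrancl_trans[OF z(1)] by blast
  then show False using tree_sep[OF assms] by contradiction
qed

lemma side_refl: "p \<in> side T p q"
  unfolding side_def by simp

lemma side_step: "z \<in> side T p q \<Longrightarrow> (z,z') \<in> rm T p q \<Longrightarrow> z' \<in> side T p q"
  unfolding side_def by (simp add: rtrancl_into_rtrancl)

lemma side_cover:
  assumes "(p,q) \<in> T" "(p,z) \<in> T\<^sup>*"
  shows "z \<in> side T p q \<union> side T q p"
  using assms(2)
proof (induction rule: rtrancl_induct)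
  case base then show ?case by (simp add: side_refl)
next
  case (step y z)
  show ?case
  proof (cases "(y,z) \<in> {(p,q),(q,p)}")
    case True
    then have "z = p \<or> z = q" by auto
    then show ?thesis using side_refl[of p T q] side_refl[of q T p] by blast
  next
    case False
    then have e: "(y,z) \<in> rm T p q" "(y,z) \<in> rm T q p" using step(2) unfolding rm_def by auto
    from step(3) show ?thesis
    proof
      assume "y \<in> side T p q"
      then have "z \<in> side T p q" using e(1) by (rule side_step)
      then show ?thesis by blast
    next
      assume "y \<in> side T q p"
      then have "z \<in> side T q p" using e(2) by (rule side_step)
      then show ?thesis by blast
    qed
  qed
qed



lemma Core_sym:
  assumes "sym T" "(a,b) \<in> Core G T"
  shows "(b,a) \<in> Core G T"
proof -
  have eq: "{cycle_edges c | c. fundamental_cycle G T c \<and> (b,a) \<in> cycle_edges c}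
          = {cycle_edges c | c. fundamental_cycle G T c \<and> (a,b) \<in> cycle_edges c}"
    using cycle_edges_sym by metis
  have "(b,a) \<in> T" using assms unfolding Core_def sym_def by blast
  moreover have "infinite {cycle_edges c | c. fundamental_cycle G T c \<and> (a,b) \<in> cycle_edges c}"
    using assms(2) unfolding Core_def by simp
  ultimately show ?thesis unfolding Core_def using eq by simp
qed

lemma finite_cycle_edges: "finite (cycle_edges c)"
  unfolding cycle_edges_def by (intro finite_UN_I) auto

lemma fin_path:
  assumes "(u,v) \<in> T\<^sup>*"
  shows "\<exists>E. finite E \<and> E \<subseteq> T \<and> (u,v) \<in> E\<^sup>*"
  using assms
proof (induction rule: rtrancl_induct)
  case base
  have "finite {} \<and> {} \<subseteq> T \<and> (u,u) \<in> {}\<^sup>*" by simp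
  then show ?case by (rule exI)
next
  case (step y z)
  then obtain E where E: "finite E" "E \<subseteq> T" "(u,y) \<in> E\<^sup>*" by metis
  have "(u,y) \<in> (insert (y,z) E)\<^sup>*" using rtrancl_mono[of E "insert (y,z) E"] E(3) by blast
  then have "(u,z) \<in> (insert (y,z) E)\<^sup>*" by (rule rtrancl_into_rtrancl) simp
  then have "finite (insert (y,z) E) \<and> insert (y,z) E \<subseteq> T \<and> (u,z) \<in> (insert (y,z) E)\<^sup>*"
    using E step(2) by simp
  then show ?case by (rule exI)
qed

lemma comp_mem: "w \<in> component R w"
  unfolding component_def by simp

lemma comp_eq:
  assumes "sym R" "(w,y) \<in> R\<^sup>*"
  shows "component R w = component R y"
proof -
  have "(y,w) \<in> R\<^sup>*" using sym_rtrancl_rev[OF assms] .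
  then show ?thesis unfolding component_def using assms(2)
    by (auto intro: rtrancl_trans)
qed

lemma sym_induced: "sym H \<Longrightarrow> sym (induced H S)"
  unfolding induced_def sym_def by blast

lemma Q1:
  assumes sG: "simple_graph G" and sT: "simple_graph T" and TG: "T \<subseteq> G"
    and ac: "acyclic_graph T" and lf: "locally_finite G" and e0: "(a,b) \<in> T"
    and fin: "finite (side T a b)"
    and hconn: "\<And>u v. (a,u) \<in> T\<^sup>* \<Longrightarrow> (u,v) \<in> G \<Longrightarrow> (u,v) \<in> T\<^sup>*"
  shows "(a,b) \<notin> Core G T"
proof
  assume core: "(a,b) \<in> Core G T"
  have symG: "sym G" using sG by (simp add: simple_graph_def)
  have symT: "sym T" using sT by (simp add: simple_graph_def)
  define S where "S = side T a b"
  define Sep where "Sep u v = {g \<in> T. (u,v) \<notin> (rm T (fst g) (snd g))\<^sup>*}" for u v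
  define P where "P = {(u,v). (u,v) \<in> G \<and> (u \<in> S \<or> v \<in> S)}"
  define CS where "CS = {cycle_edges c | c. fundamental_cycle G T c \<and> (a,b) \<in> cycle_edges c}"
  have infCS: "infinite CS" using core unfolding Core_def CS_def by blast
  define N where "N u = {v. (u,v) \<in> G}" for u
  have finN: "finite (N u)" for u using lf unfolding locally_finite_def N_def by blast
  have "P \<subseteq> Sigma S N \<union> (Sigma S N)\<inverse>"
  proof
    fix e assume "e \<in> P"
    then obtain u v where e: "e = (u,v)" "(u,v) \<in> G" "u \<in> S \<or> v \<in> S" unfolding P_def by blast
    have "(v,u) \<in> G" using e(2) symG by (auto simp: sym_def)
    then show "e \<in> Sigma S N \<union> (Sigma S N)\<inverse>" using e unfolding N_def by auto
  qed
  moreover have "finite (Sigma S N \<union> (Sigma S N)\<inverse>)"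
    using fin finN unfolding S_def by (simp add: finite_SigmaI)
  ultimately have finP: "finite P" by (rule finite_subset)
  have Sfin: "finite (Sep u v)" if "(u,v) \<in> P" for u v
  proof -
    have uv: "(u,v) \<in> G" "u \<in> S \<or> v \<in> S" using that unfolding P_def by auto
    have "(u,v) \<in> T\<^sup>*"
    proof (cases "u \<in> S")
      case True
      then have "(a,u) \<in> (rm T a b)\<^sup>*" unfolding S_def side_def by simp
      then have "(a,u) \<in> T\<^sup>*" using rtrancl_mono[OF rm_sub[of T a b]] by blast
      then show ?thesis using hconn uv(1) by blast
    next
      case False
      then have "(a,v) \<in> (rm T a b)\<^sup>*" using uv unfolding S_def side_def by simp
      then have av: "(a,v) \<in> T\<^sup>*" using rtrancl_mono[OF rm_sub[of T a b]] by blast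
      have "(v,u) \<in> G" using uv(1) symG by (auto simp: sym_def)
      then have "(v,u) \<in> T\<^sup>*" using hconn av by blast
      then show ?thesis using sym_rtrancl_rev[OF symT] by blast
    qed
    then obtain E where E: "finite E" "E \<subseteq> T" "(u,v) \<in> E\<^sup>*" using fin_path by metis
    have "Sep u v \<subseteq> E \<union> E\<inverse>"
    proof
      fix g assume g: "g \<in> Sep u v"
      show "g \<in> E \<union> E\<inverse>"
      proof (rule ccontr)
        assume "g \<notin> E \<union> E\<inverse>"
        then have "E \<subseteq> rm T (fst g) (snd g)" using E(2) unfolding rm_def by (cases g) auto
        then have "(u,v) \<in> (rm T (fst g) (snd g))\<^sup>*" using rtrancl_mono E(3) by blast
        then show False using g unfolding Sep_def by blast
      qed
    qed
    then show ?thesis using E(1) by (meson finite_Un finite_converse finite_subset)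
  qed
  have CSsub: "CS \<subseteq> (\<Union>e\<in>P. Pow ({e, prod.swap e} \<union> Sep (fst e) (snd e)))"
  proof
    fix s assume "s \<in> CS"
    then obtain c where c: "s = cycle_edges c" "fundamental_cycle G T c" "(a,b) \<in> cycle_edges c"
      unfolding CS_def by blast
    obtain u v where uv: "cycle_edges c - T = {(u,v),(v,u)}" using c(2) unfolding fundamental_cycle_def by blast
    have cyc: "length c \<ge> 3" "distinct c" "cycle_edges c \<subseteq> G" using c(2)
      unfolding fundamental_cycle_def is_cycle_def by auto
    have "(u,v) \<in> cycle_edges c - T" "(v,u) \<in> cycle_edges c - T" unfolding uv by simp_all
    then have uvc: "(u,v) \<in> cycle_edges c" "(u,v) \<notin> T" "(v,u) \<in> cycle_edges c" "(v,u) \<notin> T" by simp_all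
    have uvG: "(u,v) \<in> G" using uvc cyc(3) by blast
    have uvS: "u \<in> S \<or> v \<in> S"
    proof (rule ccontr)
      assume nS: "\<not> (u \<in> S \<or> v \<in> S)"
      define E' where "E' = cycle_edges c - {(a,b),(b,a)}"
      have ab: "(a,b) \<in> E'\<^sup>*" using cycle_path[OF cyc(2,1) c(3)] unfolding E'_def by simp
      have "z \<in> S" if "(a,z) \<in> E'\<^sup>*" for z
        using that
      proof (induction rule: rtrancl_induct)
        case base then show ?case unfolding S_def by (rule side_refl)
      next
        case (step y z)
        show ?case
        proof (cases "(y,z) \<in> T")
          case True
          then have "(y,z) \<in> rm T a b" using step(2) unfolding E'_def rm_def by blast
          with step(3) show ?thesis unfolding S_def by (rule side_step)
        next
          case False
          then have "(y,z) \<in> cycle_edges c - T" using step(2) unfolding E'_def by blast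
          then have "(y,z) \<in> {(u,v),(v,u)}" unfolding uv .
          then have "y = u \<or> y = v" by auto
          then show ?thesis using step(3) nS by blast
        qed
      qed
      then have "b \<in> S" using ab by blast
      then have "(a,b) \<in> (rm T a b)\<^sup>*" unfolding S_def side_def by simp
      then show False using tree_sep[OF sT ac e0] by contradiction
    qed
    have "(u,v) \<in> P" using uvG uvS unfolding P_def by blast
    moreover have "s \<subseteq> {(u,v), (v,u)} \<union> Sep u v"
    proof
      fix g assume gs: "g \<in> s"
      show "g \<in> {(u,v), (v,u)} \<union> Sep u v"
      proof (cases "g \<in> {(u,v), (v,u)}")
        case True then show ?thesis by blast
      next
        case False
        obtain p q where g: "g = (p,q)" by (cases g)
        have gc: "(p,q) \<in> cycle_edges c" using gs c(1) g by simp
        have gT: "(p,q) \<in> T"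
        proof (rule ccontr)
          assume "(p,q) \<notin> T"
          then have "(p,q) \<in> cycle_edges c - T" using gc by blast
          then have "(p,q) \<in> {(u,v),(v,u)}" unfolding uv .
          then show False using False g by simp
        qed
        have "(u,v) \<notin> (rm T p q)\<^sup>*"
        proof
          assume h: "(u,v) \<in> (rm T p q)\<^sup>*"
          have h2: "(v,u) \<in> (rm T p q)\<^sup>*" using sym_rtrancl_rev[OF sym_rm[OF symT] h] .
          have pth: "(p,q) \<in> (cycle_edges c - {(p,q),(q,p)})\<^sup>*"
            using cycle_path[OF cyc(2,1) gc] by simp
          have "cycle_edges c - {(p,q),(q,p)} \<subseteq> (rm T p q)\<^sup>*"
          proof
            fix e assume e: "e \<in> cycle_edges c - {(p,q),(q,p)}"
            show "e \<in> (rm T p q)\<^sup>*"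
            proof (cases "e \<in> T")
              case True
              then have "e \<in> rm T p q" using e unfolding rm_def by blast
              then show ?thesis by (cases e) (simp add: r_into_rtrancl)
            next
              case False
              then have "e \<in> cycle_edges c - T" using e by blast
              then have "e \<in> {(u,v),(v,u)}" unfolding uv .
              then have "e = (u,v) \<or> e = (v,u)" by simp
              then show ?thesis using h h2 by blast
            qed
          qed
          then have "(p,q) \<in> (rm T p q)\<^sup>*" using rtrancl_subset_rtrancl pth by blast
          then show False using tree_sep[OF sT ac gT] by contradiction
        qed
        then show ?thesis using gT g unfolding Sep_def by simp
      qed
    qed
    ultimately show "s \<in> (\<Union>e\<in>P. Pow ({e, prod.swap e} \<union> Sep (fst e) (snd e)))" by force
  qed
  have "finite (\<Union>e\<in>P. Pow ({e, prod.swap e} \<union> Sep (fst e) (snd e)))"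
  proof (intro finite_UN_I finP)
    fix e assume "e \<in> P"
    then have "finite (Sep (fst e) (snd e))" using Sfin by (cases e) auto
    then show "finite (Pow ({e, prod.swap e} \<union> Sep (fst e) (snd e)))" by simp
  qed
  then have "finite CS" using CSsub finite_subset by blast
  then show False using infCS by contradiction
qed



lemma pe_append:
  assumes "xs \<noteq> []" "ys \<noteq> []"
  shows "pe (xs @ ys) = pe xs \<union> pe ys \<union> {(last xs, hd ys), (hd ys, last xs)}"
proof -
  obtain y ys' where ys: "ys = y # ys'" using assms(2) by (cases ys) auto
  have "pe (xs @ ys) = pe (xs @ [y]) \<union> pe (y # ys')" unfolding ys by (rule pe_split)
  also have "\<dots> = pe xs \<union> {(last xs, y), (y, last xs)} \<union> pe ys" using pe_snoc[OF assms(1)] ys by simp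
  finally show ?thesis using ys by auto
qed

lemma mk_cycle:
  assumes sT: "simple_graph T" and ac: "acyclic_graph T" and TG: "T \<subseteq> G" and symG: "sym G"
    and pq: "(p,q) \<in> T" and uvG: "(u,v) \<in> G" and uvT: "(u,v) \<notin> T"
    and u: "u \<in> side T p q" and v: "v \<in> side T q p"
  shows "\<exists>c. fundamental_cycle G T c \<and> (u,v) \<in> cycle_edges c \<and> (p,q) \<in> cycle_edges c"
proof -
  have symT: "sym T" using sT by (simp add: simple_graph_def)
  have symR: "sym (rm T p q)" by (rule sym_rm[OF symT])
  have pu: "(p,u) \<in> (rm T p q)\<^sup>*" using u unfolding side_def by simp
  have qv: "(q,v) \<in> (rm T p q)\<^sup>*" using v rm_comm[of T q p] unfolding side_def by simp
  have vq: "(v,q) \<in> (rm T p q)\<^sup>*" using sym_rtrancl_rev[OF symR qv] .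
  obtain w1 where w1: "w1 \<noteq> []" "hd w1 = p" "last w1 = u" "pe w1 \<subseteq> rm T p q" "distinct w1"
    using simple_path[OF symR pu] by metis
  obtain w2 where w2: "w2 \<noteq> []" "hd w2 = v" "last w2 = q" "pe w2 \<subseteq> rm T p q" "distinct w2"
    using simple_path[OF symR vq] by metis
  have s1: "set w1 \<subseteq> side T p q"
  proof
    fix z assume "z \<in> set w1"
    then have "(p,z) \<in> (pe w1)\<^sup>*" using pe_walk[OF w1(1)] w1(2) by simp
    then have "(p,z) \<in> (rm T p q)\<^sup>*" using rtrancl_mono[OF w1(4)] by blast
    then show "z \<in> side T p q" unfolding side_def by simp
  qed
  have s2: "set w2 \<subseteq> side T q p"
  proof
    fix z assume "z \<in> set w2"
    then have "(v,z) \<in> (pe w2)\<^sup>*" using pe_walk[OF w2(1)] w2(2) by simp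
    then have "(v,z) \<in> (rm T p q)\<^sup>*" using rtrancl_mono[OF w2(4)] by blast
    then have "(q,z) \<in> (rm T p q)\<^sup>*" using rtrancl_trans[OF qv] by blast
    then show "z \<in> side T q p" unfolding side_def using rm_comm[of T q p] by simp
  qed
  define c where "c = w2 @ w1"
  have dc: "distinct c" unfolding c_def using w1(5) w2(5) s1 s2 side_disj[OF sT ac pq] by auto
  have ne: "c \<noteq> []" unfolding c_def using w1 by simp
  have hc: "hd c = v" "last c = u" unfolding c_def using w1 w2 by simp_all
  have pec: "pe c = pe w2 \<union> pe w1 \<union> {(q,p),(p,q)}"
    unfolding c_def using pe_append[OF w2(1) w1(1)] w1(2) w2(3) by simp
  have ce: "cycle_edges c = pe w2 \<union> pe w1 \<union> {(q,p),(p,q)} \<union> {(u,v),(v,u)}"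
    using cycle_edges_pe[OF ne] hc pec by auto
  have qpT: "(q,p) \<in> T" using pq symT by (auto simp: sym_def)
  have vuT: "(v,u) \<notin> T" using uvT symT by (auto simp: sym_def)
  have vuG: "(v,u) \<in> G" using uvG symG by (auto simp: sym_def)
  have "pe w2 \<subseteq> T" "pe w1 \<subseteq> T" using w1(4) w2(4) rm_sub[of T p q] by (meson order_trans)+
  then have sub: "pe w2 \<union> pe w1 \<union> {(q,p),(p,q)} \<subseteq> T" using pq qpT by simp
  have ceG: "cycle_edges c \<subseteq> G" unfolding ce using order_trans[OF sub TG] uvG vuG by simp
  have ceT: "cycle_edges c - T = {(u,v),(v,u)}" unfolding ce using sub uvT vuT by auto
  have len: "length c \<ge> 3"
  proof (rule ccontr)
    assume "\<not> length c \<ge> 3"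
    moreover have "length w1 \<ge> 1" "length w2 \<ge> 1" using w1(1) w2(1) by (simp_all add: Suc_leI)
    ultimately have "length w1 = 1" "length w2 = 1" unfolding c_def by simp_all
    then have "w1 = [hd w1]" "w2 = [last w2]" by (auto simp: length_Suc_conv)
    then have "w1 = [p]" "w2 = [q]" using w1(2) w2(3) by simp_all
    then have "u = p" "v = q" using w1(3) w2(2) by auto
    then show False using uvT pq by simp
  qed
  have "fundamental_cycle G T c" unfolding fundamental_cycle_def is_cycle_def
    using len dc ceG ceT by blast
  moreover have "(u,v) \<in> cycle_edges c" "(p,q) \<in> cycle_edges c" using ce by simp_all
  ultimately show ?thesis by blast
qed



lemma Q2:
  assumes sG: "simple_graph G" and sT: "simple_graph T" and TG: "T \<subseteq> G"
    and ac: "acyclic_graph T" and lf: "locally_finite G"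
    and Cdef: "C = component G x" and TC: "component T x = C"
    and oe: "one_ended_component G C"
    and pq: "(p,q) \<in> T" and pC: "p \<in> C" and nc: "(p,q) \<notin> Core G T"
  shows "finite (side T p q) \<or> finite (side T q p)"
proof (rule ccontr)
  assume "\<not> (finite (side T p q) \<or> finite (side T q p))"
  then have inf1: "infinite (side T p q)" and inf2: "infinite (side T q p)" by auto
  have symG: "sym G" using sG by (simp add: simple_graph_def)
  have symT: "sym T" using sT by (simp add: simple_graph_def)
  have TC': "z \<in> C \<longleftrightarrow> (x,z) \<in> T\<^sup>*" for z using TC unfolding component_def by blast
  have GC': "z \<in> C \<longleftrightarrow> (x,z) \<in> G\<^sup>*" for z using Cdef unfolding component_def by blast
  have connT: "(p,z) \<in> T\<^sup>*" if "z \<in> C" for z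
  proof -
    have xp: "(x,p) \<in> T\<^sup>*" using TC'[of p] pC by simp
    have xz: "(x,z) \<in> T\<^sup>*" using TC'[of z] that by simp
    have "(p,x) \<in> T\<^sup>*" using sym_rtrancl_rev[OF symT xp] .
    then show ?thesis using rtrancl_trans[OF _ xz] by blast
  qed
  have "(x,p) \<in> T\<^sup>*" using TC'[of p] pC by simp
  then have "(x,q) \<in> T\<^sup>*" using pq by (rule rtrancl_into_rtrancl)
  then have qC: "q \<in> C" using TC'[of q] by simp
  have rmT: "(rm T a b)\<^sup>* \<subseteq> T\<^sup>*" for a b by (rule rtrancl_mono[OF rm_sub])
  have sideC1: "side T p q \<subseteq> C"
  proof
    fix z assume "z \<in> side T p q"
    then have "(p,z) \<in> T\<^sup>*" using rmT unfolding side_def by blast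
    moreover have "(x,p) \<in> T\<^sup>*" using TC'[of p] pC by simp
    ultimately have "(x,z) \<in> T\<^sup>*" using rtrancl_trans by metis
    then show "z \<in> C" using TC'[of z] by simp
  qed
  have sideC2: "side T q p \<subseteq> C"
  proof
    fix z assume "z \<in> side T q p"
    then have "(q,z) \<in> T\<^sup>*" using rmT unfolding side_def by blast
    moreover have "(x,q) \<in> T\<^sup>*" using TC'[of q] qC by simp
    ultimately have "(x,z) \<in> T\<^sup>*" using rtrancl_trans by metis
    then show "z \<in> C" using TC'[of z] by simp
  qed
  have cover: "z \<in> side T p q \<union> side T q p" if "z \<in> C" for z
    using side_cover[OF pq connT[OF that]] .
  have disj: "side T p q \<inter> side T q p = {}" by (rule side_disj[OF sT ac pq])
  define X where "X = {(u,v). (u,v) \<in> G \<and> (u,v) \<notin> T \<and> u \<in> side T p q \<and> v \<in> side T q p}"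
  define CS where "CS = {cycle_edges c | c. fundamental_cycle G T c \<and> (p,q) \<in> cycle_edges c}"
  have finCS: "finite CS" using nc pq unfolding Core_def CS_def by blast
  have "X \<subseteq> \<Union> CS"
  proof
    fix e assume "e \<in> X"
    then obtain u v where e: "e = (u,v)" "(u,v) \<in> G" "(u,v) \<notin> T" "u \<in> side T p q" "v \<in> side T q p"
      unfolding X_def by blast
    obtain c where c: "fundamental_cycle G T c" "(u,v) \<in> cycle_edges c" "(p,q) \<in> cycle_edges c"
      using mk_cycle[OF sT ac TG symG pq e(2,3,4,5)] by metis
    then have "cycle_edges c \<in> CS" unfolding CS_def by blast
    then show "e \<in> \<Union> CS" using c(2) e(1) by blast
  qed
  moreover have "finite (\<Union> CS)"
  proof (rule finite_Union[OF finCS])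
    fix s assume "s \<in> CS"
    then show "finite s" unfolding CS_def using finite_cycle_edges by blast
  qed
  ultimately have finX: "finite X" by (rule finite_subset)
  define F where "F = {p,q} \<union> fst ` X \<union> snd ` X"
  have finF: "finite F" unfolding F_def using finX by simp
  have cross: "y \<in> F \<and> z \<in> F" if "(y,z) \<in> G" "y \<in> side T p q" "z \<in> side T q p" for y z
  proof (cases "(y,z) \<in> T")
    case True
    show ?thesis
    proof (cases "(y,z) \<in> {(p,q),(q,p)}")
      case True then show ?thesis unfolding F_def by auto
    next
      case False
      then have "(y,z) \<in> rm T p q" using \<open>(y,z) \<in> T\<close> unfolding rm_def by blast
      with that(2) have "z \<in> side T p q" by (rule side_step)
      then show ?thesis using that(3) disj by blast
    qed
  next
    case False
    then have "(y,z) \<in> X" unfolding X_def using that by blast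
    then show ?thesis unfolding F_def by force
  qed
  have cross2: "y \<in> F" if "(y,z) \<in> G" "y \<in> side T q p" "z \<in> side T p q" for y z
  proof -
    have "(z,y) \<in> G" using that(1) symG by (auto simp: sym_def)
    then show ?thesis using cross that(2,3) by blast
  qed
  define Rind where "Rind = induced G (C - F)"
  have symRind: "sym Rind" unfolding Rind_def by (rule sym_induced[OF symG])
  have cl1: "z \<in> side T p q" if "w \<in> side T p q" "(w,z) \<in> Rind\<^sup>*" for w z
    using that(2)
  proof (induction rule: rtrancl_induct)
    case base then show ?case using that(1) .
  next
    case (step y z)
    have yz: "(y,z) \<in> G" "y \<in> C - F" "z \<in> C - F" using step(2) unfolding Rind_def induced_def by auto
    show ?case
    proof (rule ccontr)
      assume "z \<notin> side T p q"
      then have "z \<in> side T q p" using cover yz(3) by blast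
      then have "y \<in> F" using cross yz(1) step(3) by blast
      then show False using yz(2) by blast
    qed
  qed
  have cl2: "z \<in> side T q p" if "w \<in> side T q p" "(w,z) \<in> Rind\<^sup>*" for w z
    using that(2)
  proof (induction rule: rtrancl_induct)
    case base then show ?case using that(1) .
  next
    case (step y z)
    have yz: "(y,z) \<in> G" "y \<in> C - F" "z \<in> C - F" using step(2) unfolding Rind_def induced_def by auto
    show ?case
    proof (rule ccontr)
      assume "z \<notin> side T q p"
      then have "z \<in> side T p q" using cover yz(3) by blast
      then have "y \<in> F" using cross2 yz(1) step(3) by blast
      then show False using yz(2) by blast
    qed
  qed
  define N where "N = (\<Union>z\<in>F. {y. (z,y) \<in> G})"
  have finN: "finite N" unfolding N_def using finF lf unfolding locally_finite_def by blast
  have reachN: "\<exists>y\<in>N. (w,y) \<in> Rind\<^sup>*" if "w \<in> C - F" for w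
  proof -
    have xw: "(x,w) \<in> G\<^sup>*" using GC'[of w] that by simp
    have xp: "(x,p) \<in> G\<^sup>*" using GC'[of p] pC by simp
    have "(w,x) \<in> G\<^sup>*" using sym_rtrancl_rev[OF symG xw] .
    then have wp: "(w,p) \<in> G\<^sup>*" using rtrancl_trans[OF _ xp] by blast
    have "w \<in> C - F \<longrightarrow> (\<exists>y\<in>N. (w,y) \<in> Rind\<^sup>*)"
      using wp
    proof (induction rule: converse_rtrancl_induct)
      case base then show ?case unfolding F_def by blast
    next
      case (step w w')
      show ?case
      proof
        assume w: "w \<in> C - F"
        show "\<exists>y\<in>N. (w,y) \<in> Rind\<^sup>*"
        proof (cases "w' \<in> F")
          case True
          have "(w',w) \<in> G" using step(1) symG by (auto simp: sym_def)
          then have "w \<in> N" unfolding N_def using True by blast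
          then show ?thesis by blast
        next
          case False
          have "(x,w) \<in> G\<^sup>*" using w GC'[of w] by simp
          then have "(x,w') \<in> G\<^sup>*" using step(1) by (rule rtrancl_into_rtrancl)
          then have "w' \<in> C" using GC'[of w'] by simp
          then have w'C: "w' \<in> C - F" using False by blast
          then obtain y where y: "y \<in> N" "(w',y) \<in> Rind\<^sup>*" using step(3) by blast
          have "(w,w') \<in> Rind" unfolding Rind_def induced_def using w w'C step(1) by blast
          then have "(w,y) \<in> Rind\<^sup>*" using y(2) by (rule converse_rtrancl_into_rtrancl)
          then show ?thesis using y(1) by blast
        qed
      qed
    qed
    then show ?thesis using that by blast
  qed
  have compsub: "components_on G (C - F) \<subseteq> (\<lambda>y. component Rind y) ` N"
  proof
    fix K assume "K \<in> components_on G (C - F)"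
    then obtain w where w: "K = component Rind w" "w \<in> C - F"
      unfolding components_on_def Rind_def by blast
    obtain y where y: "y \<in> N" "(w,y) \<in> Rind\<^sup>*" using reachN[OF w(2)] by blast
    have "K = component Rind y" using w(1) comp_eq[OF symRind y(2)] by simp
    then show "K \<in> (\<lambda>y. component Rind y) ` N" using y(1) by blast
  qed
  have fincomps: "finite (components_on G (C - F))"
    using finite_subset[OF compsub] finN by blast
  have infcomp: "\<exists>w\<in>A - F. infinite (component Rind w)" if "infinite A" "A \<subseteq> C" for A
  proof (rule ccontr)
    assume "\<not> (\<exists>w\<in>A - F. infinite (component Rind w))"
    then have allfin: "\<forall>w\<in>A - F. finite (component Rind w)" by blast
    have "(\<lambda>w. component Rind w) ` (A - F) \<subseteq> components_on G (C - F)"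
      using that(2) unfolding components_on_def Rind_def by blast
    then have "finite ((\<lambda>w. component Rind w) ` (A - F))" using fincomps finite_subset by blast
    then have "finite (\<Union> ((\<lambda>w. component Rind w) ` (A - F)))" using allfin by blast
    moreover have "A - F \<subseteq> \<Union> ((\<lambda>w. component Rind w) ` (A - F))" using comp_mem by fast
    ultimately have "finite (A - F)" using finite_subset by blast
    then show False using that(1) finF by simp
  qed
  obtain w1 where w1: "w1 \<in> side T p q - F" "infinite (component Rind w1)"
    using infcomp[OF inf1 sideC1] by blast
  obtain w2 where w2: "w2 \<in> side T q p - F" "infinite (component Rind w2)"
    using infcomp[OF inf2 sideC2] by blast
  have K1: "component Rind w1 \<in> components_on G (C - F)"
    using w1(1) sideC1 unfolding components_on_def Rind_def by blast
  have K2: "component Rind w2 \<in> components_on G (C - F)"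
    using w2(1) sideC2 unfolding components_on_def Rind_def by blast
  have "w2 \<in> component Rind w2" by (rule comp_mem)
  moreover have "w2 \<notin> component Rind w1"
  proof
    assume "w2 \<in> component Rind w1"
    then have "(w1,w2) \<in> Rind\<^sup>*" unfolding component_def by simp
    then have "w2 \<in> side T p q" using cl1 w1(1) by blast
    then show False using w2(1) disj by blast
  qed
  ultimately have ne: "component Rind w1 \<noteq> component Rind w2" by blast
  have "\<exists>!K. K \<in> components_on G (C - F) \<and> infinite K" using oe finF unfolding one_ended_component_def by blast
  then show False using K1 K2 w1(2) w2(2) ne by blast
qed



lemma L3a:
  assumes yn: "y \<notin> side T t s" and t: "t \<in> side T y y'"
  shows "side T t s \<subseteq> side T y y'"
proof
  fix z assume "z \<in> side T t s"
  then have "(t,z) \<in> (rm T t s)\<^sup>*" unfolding side_def by simp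
  then show "z \<in> side T y y'"
  proof (induction rule: rtrancl_induct)
    case base then show ?case using t .
  next
    case (step w z)
    have wS: "w \<in> side T t s" using step(1) unfolding side_def by simp
    have zS: "z \<in> side T t s" using wS step(2) by (rule side_step)
    show ?case
    proof (cases "(w,z) \<in> {(y,y'),(y',y)}")
      case True
      then have "w = y \<or> z = y" by auto
      then show ?thesis using wS zS yn by blast
    next
      case False
      then have "(w,z) \<in> rm T y y'" using step(2) unfolding rm_def by blast
      with step(3) show ?thesis by (rule side_step)
    qed
  qed
qed

lemma fin_V:
  assumes "(m,a) \<in> T\<^sup>*"
  shows "\<exists>V. finite V \<and> m \<in> V \<and> a \<in> V \<and> (\<forall>y\<in>V. (y,a) \<in> (T \<inter> V \<times> V)\<^sup>*)"
  using assms
proof (induction rule: converse_rtrancl_induct)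
  case base
  have "finite {a} \<and> a \<in> {a} \<and> a \<in> {a} \<and> (\<forall>y\<in>{a}. (y,a) \<in> (T \<inter> {a} \<times> {a})\<^sup>*)" by simp
  then show ?case by (rule exI)
next
  case (step m m')
  then obtain V where V: "finite V" "m' \<in> V" "a \<in> V" "\<forall>y\<in>V. (y,a) \<in> (T \<inter> V \<times> V)\<^sup>*" by metis
  define V' where "V' = insert m V"
  have mono: "(T \<inter> V \<times> V)\<^sup>* \<subseteq> (T \<inter> V' \<times> V')\<^sup>*" unfolding V'_def by (rule rtrancl_mono) blast
  have "(m,m') \<in> T \<inter> V' \<times> V'" using step(1) V(2) unfolding V'_def by blast
  moreover have "(m',a) \<in> (T \<inter> V' \<times> V')\<^sup>*" using V(2,4) mono by blast
  ultimately have ma: "(m,a) \<in> (T \<inter> V' \<times> V')\<^sup>*" by (rule converse_rtrancl_into_rtrancl)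
  have "\<forall>y\<in>V'. (y,a) \<in> (T \<inter> V' \<times> V')\<^sup>*"
  proof
    fix y assume "y \<in> V'"
    then have "y = m \<or> y \<in> V" unfolding V'_def by blast
    then show "(y,a) \<in> (T \<inter> V' \<times> V')\<^sup>*"
    proof
      assume "y = m" then show ?thesis using ma by simp
    next
      assume "y \<in> V" then show ?thesis using V(4) mono by blast
    qed
  qed
  then have "finite V' \<and> m \<in> V' \<and> a \<in> V' \<and> (\<forall>y\<in>V'. (y,a) \<in> (T \<inter> V' \<times> V')\<^sup>*)"
    using V unfolding V'_def by simp
  then show ?case by (rule exI)
qed

lemma main_pt:
  assumes sG: "simple_graph G" and sT: "simple_graph T" and TG: "T \<subseteq> G"
    and ac: "acyclic_graph T" and lf: "locally_finite G"
    and TC: "component T x = component G x"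
    and oe: "one_ended_component G (component G x)"
  shows "let C = component G x; TC = T \<inter> (C \<times> C); R = TC - Core G T in
      R = TC \<or> (\<forall>K \<in> components_on R C. finite K)"
proof -
  define C where "C = component G x"
  define R where "R = T \<inter> (C \<times> C) - Core G T"
  have symG: "sym G" using sG by (simp add: simple_graph_def)
  have symT: "sym T" using sT by (simp add: simple_graph_def)
  have TC': "z \<in> C \<longleftrightarrow> (x,z) \<in> T\<^sup>*" for z using TC unfolding C_def component_def by blast
  have GC': "z \<in> C \<longleftrightarrow> (x,z) \<in> G\<^sup>*" for z unfolding C_def component_def by blast
  have TC2: "component T x = C" using TC unfolding C_def by simp
  have oe2: "one_ended_component G C" using oe unfolding C_def by simp
  have connT: "(u,v) \<in> T\<^sup>*" if "u \<in> C" "v \<in> C" for u v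
  proof -
    have xu: "(x,u) \<in> T\<^sup>*" using TC'[of u] that(1) by simp
    have xv: "(x,v) \<in> T\<^sup>*" using TC'[of v] that(2) by simp
    have "(u,x) \<in> T\<^sup>*" using sym_rtrancl_rev[OF symT xu] .
    then show ?thesis using rtrancl_trans[OF _ xv] by blast
  qed
  have TstarC: "v \<in> C" if "u \<in> C" "(u,v) \<in> T\<^sup>*" for u v
  proof -
    have "(x,u) \<in> T\<^sup>*" using TC'[of u] that(1) by simp
    then have "(x,v) \<in> T\<^sup>*" using that(2) by (rule rtrancl_trans)
    then show ?thesis using TC'[of v] by simp
  qed
  have GC: "v \<in> C" if "u \<in> C" "(u,v) \<in> G" for u v
  proof -
    have "(x,u) \<in> G\<^sup>*" using GC'[of u] that(1) by simp
    then have "(x,v) \<in> G\<^sup>*" using that(2) by (rule rtrancl_into_rtrancl)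
    then show ?thesis using GC'[of v] by simp
  qed
  have "\<forall>K \<in> components_on R C. finite K" if neq: "R \<noteq> T \<inter> (C \<times> C)"
  proof -
    from neq
    obtain a b where ab: "(a,b) \<in> T" "a \<in> C" "b \<in> C" "(a,b) \<in> Core G T"
      unfolding R_def by blast
    have baCore: "(b,a) \<in> Core G T" using Core_sym[OF symT ab(4)] .
    have baT: "(b,a) \<in> T" using ab(1) symT by (auto simp: sym_def)
    have hconn: "(u,v) \<in> T\<^sup>*" if "u \<in> C" "(u,v) \<in> G" for u v
      using connT[OF that(1) GC[OF that]] .
    have inf1: "infinite (side T a b)"
    proof
      assume f: "finite (side T a b)"
      have "(a,b) \<notin> Core G T"
      proof (rule Q1[OF sG sT TG ac lf ab(1) f])
        fix u v assume "(a,u) \<in> T\<^sup>*" "(u,v) \<in> G"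
        then show "(u,v) \<in> T\<^sup>*" using hconn TstarC ab(2) by blast
      qed
      then show False using ab(4) by contradiction
    qed
    have inf2: "infinite (side T b a)"
    proof
      assume f: "finite (side T b a)"
      have "(b,a) \<notin> Core G T"
      proof (rule Q1[OF sG sT TG ac lf baT f])
        fix u v assume "(b,u) \<in> T\<^sup>*" "(u,v) \<in> G"
        then show "(u,v) \<in> T\<^sup>*" using hconn TstarC ab(3) by blast
      qed
      then show False using baCore by contradiction
    qed
    define Rind where "Rind = induced R C"
    have symR: "sym R" unfolding R_def using symT Core_sym[OF symT] by (auto simp: sym_def)
    have symRind: "sym Rind" unfolding Rind_def by (rule sym_induced[OF symR])
    have RindT: "Rind \<subseteq> T" unfolding Rind_def induced_def R_def by blast
    show "\<forall>K \<in> components_on R C. finite K"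
    proof
      fix K assume "K \<in> components_on R C"
      then obtain m where m: "K = component Rind m" "m \<in> C"
        unfolding components_on_def Rind_def by blast
      obtain V where V: "finite V" "m \<in> V" "a \<in> V" "\<forall>y\<in>V. (y,a) \<in> (T \<inter> V \<times> V)\<^sup>*"
        using fin_V[OF connT[OF m(2) ab(2)]] by metis
      define I where "I = {(y,y'). y \<in> V \<and> (y,y') \<in> G \<and> finite (side T y' y)}"
      have finI: "finite I"
      proof -
        have "I \<subseteq> Sigma V (\<lambda>y. {y'. (y,y') \<in> G})" unfolding I_def by blast
        moreover have "finite (Sigma V (\<lambda>y. {y'. (y,y') \<in> G}))"
          using V(1) lf unfolding locally_finite_def by (simp add: finite_SigmaI)
        ultimately show ?thesis by (rule finite_subset)
      qed
      have key: "(y,y') \<in> I" if y: "y \<in> V" "y' \<notin> V" "(y',y) \<in> Rind" for y y'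
      proof -
        have e: "(y',y) \<in> T" "y' \<in> C" "y \<in> C" "(y',y) \<notin> Core G T"
          using y(3) unfolding Rind_def induced_def R_def by auto
        have yy'T: "(y,y') \<in> T" using e(1) symT by (auto simp: sym_def)
        have nc2: "(y,y') \<notin> Core G T" using e(4) Core_sym[OF symT] by blast
        have "finite (side T y' y) \<or> finite (side T y y')"
          using Q2[OF sG sT TG ac lf C_def TC2 oe2 e(1) e(2) e(4)] .
        moreover have "infinite (side T y y')"
        proof
          assume fin: "finite (side T y y')"
          have "T \<inter> V \<times> V \<subseteq> rm T y y'" using y(2) unfolding rm_def by blast
          then have "(y,a) \<in> (rm T y y')\<^sup>*" using y(1) V(4) rtrancl_mono by blast
          then have aS: "a \<in> side T y y'" unfolding side_def by simp
          have "(a,b) \<noteq> (y,y')" "(a,b) \<noteq> (y',y)" using ab(4) e(4) nc2 by auto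
          then have "(a,b) \<in> rm T y y'" using ab(1) unfolding rm_def by blast
          with aS have bS: "b \<in> side T y y'" by (rule side_step)
          have "side T a b \<inter> side T b a = {}" by (rule side_disj[OF sT ac ab(1)])
          then have "y \<notin> side T a b \<or> y \<notin> side T b a" by blast
          then have "side T a b \<subseteq> side T y y' \<or> side T b a \<subseteq> side T y y'"
            using L3a[OF _ aS] L3a[OF _ bS] by blast
          then show False using fin inf1 inf2 finite_subset by blast
        qed
        ultimately have "finite (side T y' y)" by blast
        moreover have "(y,y') \<in> G" using yy'T TG by blast
        ultimately show ?thesis unfolding I_def using y(1) by blast
      qed
      have reach: "z \<in> V \<or> (\<exists>y y'. y \<in> V \<and> y' \<notin> V \<and> (y',y) \<in> Rind \<and> (z,y') \<in> (T \<inter> (-V) \<times> (-V))\<^sup>*)"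
        if "(z,m) \<in> Rind\<^sup>*" for z
        using that
      proof (induction rule: converse_rtrancl_induct)
        case base then show ?case using V(2) by blast
      next
        case (step z z')
        show ?case
        proof (cases "z \<in> V")
          case True then show ?thesis by blast
        next
          case False
          show ?thesis
          proof (cases "z' \<in> V")
            case True
            then show ?thesis using False step(1) by blast
          next
            case False2: False
            then obtain y y' where yy: "y \<in> V" "y' \<notin> V" "(y',y) \<in> Rind" "(z',y') \<in> (T \<inter> (-V) \<times> (-V))\<^sup>*"
              using step(3) by blast
            have "(z,z') \<in> T \<inter> (-V) \<times> (-V)" using step(1) RindT False False2 by blast
            then have "(z,y') \<in> (T \<inter> (-V) \<times> (-V))\<^sup>*" using yy(4) by (rule converse_rtrancl_into_rtrancl)
            then show ?thesis using yy(1,2,3) by blast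
          qed
        qed
      qed
      have "K \<subseteq> V \<union> (\<Union>e\<in>I. side T (snd e) (fst e))"
      proof
        fix z assume "z \<in> K"
        then have "(m,z) \<in> Rind\<^sup>*" using m(1) unfolding component_def by simp
        then have "(z,m) \<in> Rind\<^sup>*" using sym_rtrancl_rev[OF symRind] by blast
        then have "z \<in> V \<or> (\<exists>y y'. y \<in> V \<and> y' \<notin> V \<and> (y',y) \<in> Rind \<and> (z,y') \<in> (T \<inter> (-V) \<times> (-V))\<^sup>*)"
          by (rule reach)
        then show "z \<in> V \<union> (\<Union>e\<in>I. side T (snd e) (fst e))"
        proof
          assume "z \<in> V" then show ?thesis by blast
        next
          assume "\<exists>y y'. y \<in> V \<and> y' \<notin> V \<and> (y',y) \<in> Rind \<and> (z,y') \<in> (T \<inter> (-V) \<times> (-V))\<^sup>*"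
          then obtain y y' where yy: "y \<in> V" "y' \<notin> V" "(y',y) \<in> Rind" "(z,y') \<in> (T \<inter> (-V) \<times> (-V))\<^sup>*"
            by blast
          have sub: "T \<inter> (-V) \<times> (-V) \<subseteq> rm T y' y" using yy(1) unfolding rm_def by blast
          have "(z,y') \<in> (rm T y' y)\<^sup>*" using rtrancl_mono[OF sub] yy(4) by blast
          then have "(y',z) \<in> (rm T y' y)\<^sup>*" using sym_rtrancl_rev[OF sym_rm[OF symT]] by blast
          then have "z \<in> side T y' y" unfolding side_def by simp
          moreover have "(y,y') \<in> I" using key[OF yy(1,2,3)] .
          ultimately show ?thesis by force
        qed
      qed
      moreover have "finite (V \<union> (\<Union>e\<in>I. side T (snd e) (fst e)))"
      proof -
        have "finite (side T (snd e) (fst e))" if "e \<in> I" for e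
          using that unfolding I_def by auto
        then show ?thesis using V(1) finI by blast
      qed
      ultimately show "finite K" by (rule finite_subset)
    qed
  qed
  then have "R = T \<inter> (C \<times> C) \<or> (\<forall>K \<in> components_on R C. finite K)" by blast
  then show ?thesis unfolding C_def R_def Let_def by simp
qed


theorem lemma3p17:
  fixes M :: "'a::polish_space measure" and G T :: "('a \<times> 'a) set"
  assumes "prob_space M" and "sets M = sets borel"
    and "measurable_graph M G" and "locally_finite G" and "one_ended M G"
    and "hyperfinite M G" and "mcp M G"
    and "measurable_spanning_tree M G T"
  shows "AE x in M.
    (let C = component G x; TC = T \<inter> (C \<times> C); R = TC - Core G T in
      R = TC \<or> (\<forall>K \<in> components_on R C. finite K))"
proof -
  have sG: "simple_graph G" using assms(3) unfolding measurable_graph_def by blast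
  have sT: "simple_graph T" and TG: "T \<subseteq> G" and ac: "acyclic_graph T"
    and AE1: "AE x in M. component T x = component G x"
    using assms(8) unfolding measurable_spanning_tree_def measurable_graph_def by blast+
  have AE2: "AE x in M. one_ended_component G (component G x)"
    using assms(5) unfolding one_ended_def .
  from AE1 AE2 show ?thesis
  proof eventually_elim
    case (elim x)
    show ?case by (rule main_pt[OF sG sT TG ac assms(4) elim(1) elim(2)])
  qed
qed

end
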